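(* Consider an instance of the bicriteria asymmetric traveling salesman problem (bi-ATSP) with tour set $\mathcal{C}$, vector criterion $D=(D_1,D_2)$, outcome set $\mathcal{D}=D(\mathcal{C})$, and $\mathcal{D}_i=D_i(\mathcal{C})$ for $i=1,2$. Suppose that $$P(\mathcal{D}) = \{ (y_1, y_2): y_2 = a - k y_1,\ y_1 \in \mathcal{D}_1,\ y_2 \in \mathcal{D}_2 \},$$ where $a>0$ and $k>0$ are constants. Suppose the 1st criterion $D_1$ is more important than the 2nd criterion $D_2$ with coefficient of relative importance $\theta'\in(0,1)$, and let $\hat{P}(\mathcal{D})$ be the corresponding reduced Pareto set (reduction with $i=1$, $j=2$, $\theta=\theta'$). If $\theta' \geqslant k/(k+1)$, then $\hat{P}(\mathcal{D})$ consists of exactly one element. If $\theta' < k/(k+1)$, then $\hat{P}(\mathcal{D}) = P(\mathcal{D})$.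
   Context: Bi-ATSP: given a complete directed graph $G=(V,E)$ on $n$ vertices, each arc $e\in E$ carries a weight vector $d(e)=(d_1(e),d_2(e))$ of positive numbers. $\mathcal{C}$ is the set of all $(n-1)!$ Hamiltonian circuits (tours) of $G$, and for a tour $C$, $D(C)=(D_1(C),D_2(C))$ with $D_j(C)=\sum_{e\in C} d_j(e)$. For vectors $y^*,y$, write $y^*\leq y$ if $y^*\neq y$ and $y^*_s\leqslant y_s$ for every coordinate $s$ (Pareto relation). For a vector criterion $F$ on $\mathcal{C}$, the set of pareto-optimal tours is $P_F(\mathcal{C})=\{C\in\mathcal{C}: \nexists C^*\in\mathcal{C},\ F(C^* )\leq F(C)\}$. The Pareto set is $P(\mathcal{D})=\{y\in\mathcal{D}: \nexists y^*\in\mathcal{D},\ y^*\leq y\}$. Reduced Pareto set: if criterion $D_i$ is declared more important than criterion $D_j$ ($\{i,j\}=\{1,2\}$) with coefficient of relative importance $\theta\in(0,1)$, define the new criterion $\hat D$ by $\hat D_j=\theta D_i+(1-\theta)D_j$ and $\hat D_i=D_i$, and set $\hat{P}(\mathcal{D})=D(P_{\hat D}(\mathcal{C}))$ (a subset of $P(\mathcal{D})$). *)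

theory Defs
  imports Complex_Main
begin

text \<open>Vertices of the complete directed graph on n vertices: 0..<n.
  Arcs: pairs (i,j) of distinct vertices.\<close>

definition tours :: "nat \<Rightarrow> (nat \<times> nat) set set" where
  "tours n = { {(v i, v ((i + 1) mod n)) | i. i < n} | v. bij_betw v {0..<n} {0..<n} }"

definition Dvec :: "(nat \<Rightarrow> nat \<Rightarrow> real) \<Rightarrow> (nat \<Rightarrow> nat \<Rightarrow> real)
    \<Rightarrow> (nat \<times> nat) set \<Rightarrow> real \<times> real" where
  "Dvec d1 d2 C = ((\<Sum>(i,j)\<in>C. d1 i j), (\<Sum>(i,j)\<in>C. d2 i j))"

definition pareto_le :: "real \<times> real \<Rightarrow> real \<times> real \<Rightarrow> bool" where
  "pareto_le ys y \<longleftrightarrow> ys \<noteq> y \<and> fst ys \<le> fst y \<and> snd ys \<le> snd y"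

definition pareto_set :: "(real \<times> real) set \<Rightarrow> (real \<times> real) set" where
  "pareto_set Y = {y \<in> Y. \<not> (\<exists>ys\<in>Y. pareto_le ys y)}"

definition pareto_opt :: "('c \<Rightarrow> real \<times> real) \<Rightarrow> 'c set \<Rightarrow> 'c set" where
  "pareto_opt F Cs = {C \<in> Cs. \<not> (\<exists>Cs'\<in>Cs. pareto_le (F Cs') (F C))}"

text \<open>Criterion D_1 more important than D_2 with coefficient theta:
  hat D_1 = D_1, hat D_2 = theta D_1 + (1 - theta) D_2.\<close>
definition reduce12 :: "real \<Rightarrow> ('c \<Rightarrow> real \<times> real) \<Rightarrow> 'c \<Rightarrow> real \<times> real" where
  "reduce12 \<theta> F C = (fst (F C), \<theta> * fst (F C) + (1 - \<theta>) * snd (F C))"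

definition reduced_pareto12 :: "real \<Rightarrow> ('c \<Rightarrow> real \<times> real) \<Rightarrow> 'c set \<Rightarrow> (real \<times> real) set" where
  "reduced_pareto12 \<theta> F Cs = F ` pareto_opt (reduce12 \<theta> F) Cs"

end

theory Submission
  imports Defs
begin

definition hh :: "real \<Rightarrow> real \<times> real \<Rightarrow> real \<times> real" where
  "hh t y = (fst y, t * fst y + (1 - t) * snd y)"

lemma L1:
  assumes "0 < t" "t < 1" "pareto_le z y"
  shows "pareto_le (hh t z) (hh t y)"
proof -
  have a: "fst z \<le> fst y" "snd z \<le> snd y" "z \<noteq> y" using assms(3) by (auto simp: pareto_le_def)
  have b: "(1 - t) * snd z \<le> (1 - t) * snd y" using a assms by (intro mult_left_mono) auto
  have c: "t * fst z \<le> t * fst y" using a assms by (intro mult_left_mono) auto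
  have d: "hh t z \<noteq> hh t y"
  proof
    assume e: "hh t z = hh t y"
    then have f: "fst z = fst y" by (simp add: hh_def)
    with e have "(1 - t) * snd z = (1 - t) * snd y" by (simp add: hh_def)
    then have "snd z = snd y" using assms by simp
    with f a show False by (simp add: prod_eq_iff)
  qed
  show ?thesis using a b c d by (simp add: pareto_le_def hh_def)
qed

lemma L2: "pareto_le x y \<Longrightarrow> pareto_le y z \<Longrightarrow> pareto_le x z"
  by (auto simp: pareto_le_def prod_eq_iff)

lemma L4:
  assumes "finite Y" "y \<in> Y"
  shows "\<exists>p\<in>pareto_set Y. p = y \<or> pareto_le p y"
proof -
  define S where "S = {z\<in>Y. fst z \<le> fst y \<and> snd z \<le> snd y}"
  have fS: "finite S" using assms by (simp add: S_def)
  have yS: "y \<in> S" using assms by (simp add: S_def)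
  define f where "f = (\<lambda>z::real\<times>real. fst z + snd z)"
  define m where "m = Min (f ` S)"
  have "m \<in> f ` S" unfolding m_def using fS yS by (intro Min_in) auto
  then obtain p where pS: "p \<in> S" and pm: "f p = m" by auto
  have mle: "\<And>z. z \<in> S \<Longrightarrow> m \<le> f z" unfolding m_def using fS by simp
  have "p \<in> pareto_set Y"
  proof (rule ccontr)
    assume "p \<notin> pareto_set Y"
    then obtain q where q: "q \<in> Y" "pareto_le q p" using pS by (auto simp: pareto_set_def S_def)
    then have qS: "q \<in> S" using pS by (auto simp: S_def pareto_le_def)
    have "f q < f p" using q(2) by (auto simp: f_def pareto_le_def prod_eq_iff)
    with mle[OF qS] pm show False by simp
  qed
  moreover have "p = y \<or> pareto_le p y" using pS by (auto simp: S_def pareto_le_def)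
  ultimately show ?thesis by blast
qed

lemma main:
  fixes Y :: "(real \<times> real) set" and a k t :: real
  assumes fin: "finite Y" and ne: "Y \<noteq> {}" and t0: "0 < t" and t1: "t < 1" and k0: "k > 0"
    and line: "\<And>y. y \<in> pareto_set Y \<Longrightarrow> snd y = a - k * fst y"
  defines "R \<equiv> {y\<in>Y. \<not> (\<exists>z\<in>Y. pareto_le (hh t z) (hh t y))}"
  shows "(t \<ge> k / (k + 1) \<longrightarrow> (\<exists>y. R = {y})) \<and> (t < k / (k + 1) \<longrightarrow> R = pareto_set Y)"
proof -
  have L3: "R \<subseteq> pareto_set Y"
    using L1[OF t0 t1] by (auto simp: R_def pareto_set_def)
  have L5: "y \<in> R" if yP: "y \<in> pareto_set Y"
      and np: "\<not> (\<exists>p\<in>pareto_set Y. pareto_le (hh t p) (hh t y))" for y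
  proof -
    have "\<not> pareto_le (hh t z) (hh t y)" if z: "z \<in> Y" for z
    proof
      assume zz: "pareto_le (hh t z) (hh t y)"
      obtain p where p: "p \<in> pareto_set Y" "p = z \<or> pareto_le p z" using L4[OF fin z] by blast
      have "pareto_le (hh t p) (hh t y)"
        using p(2) zz L1[OF t0 t1] L2 by blast
      with p(1) np show False by blast
    qed
    with yP show ?thesis by (auto simp: R_def pareto_set_def)
  qed
  define c where "c = t - (1 - t) * k"
  have hh2: "snd (hh t y) = (1 - t) * a + c * fst y" if "y \<in> pareto_set Y" for y
    unfolding hh_def c_def by (simp add: line[OF that] algebra_simps)
  have same: "p = y" if "p \<in> pareto_set Y" "y \<in> pareto_set Y" "fst p = fst y" for p y
    using line[OF that(1)] line[OF that(2)] that(3) by (simp add: prod_eq_iff)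
  have finP: "finite (pareto_set Y)" using fin by (simp add: pareto_set_def)
  obtain y1 where "y1 \<in> Y" using ne by blast
  then have neP: "pareto_set Y \<noteq> {}" using L4[OF fin] by blast
  have A: "\<exists>y. R = {y}" if th: "t \<ge> k / (k + 1)"
  proof -
    have "k \<le> t * (k + 1)" using th k0 by (simp add: field_simps)
    then have c0: "c \<ge> 0" by (simp add: c_def algebra_simps)
    define m where "m = Min (fst ` pareto_set Y)"
    have "m \<in> fst ` pareto_set Y" unfolding m_def using finP neP by (intro Min_in) auto
    then obtain y0 where y0: "y0 \<in> pareto_set Y" "fst y0 = m" by auto
    have mle: "\<And>z. z \<in> pareto_set Y \<Longrightarrow> m \<le> fst z" unfolding m_def using finP by simp
    have "y0 \<in> R"
    proof (rule L5[OF y0(1)])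
      show "\<not> (\<exists>p\<in>pareto_set Y. pareto_le (hh t p) (hh t y0))"
      proof
        assume "\<exists>p\<in>pareto_set Y. pareto_le (hh t p) (hh t y0)"
        then obtain p where p: "p \<in> pareto_set Y" "pareto_le (hh t p) (hh t y0)" by blast
        then have "fst p \<le> fst y0" by (simp add: pareto_le_def hh_def)
        with mle[OF p(1)] y0 have "fst p = fst y0" by simp
        with same[OF p(1) y0(1)] p(2) show False by (simp add: pareto_le_def)
      qed
    qed
    moreover have "y = y0" if yR: "y \<in> R" for y
    proof (rule ccontr)
      assume ne: "y \<noteq> y0"
      have yP: "y \<in> pareto_set Y" using yR L3 by blast
      have "fst y \<noteq> fst y0" using same[OF yP y0(1)] ne by blast
      with mle[OF yP] y0 have lt: "fst y0 < fst y" by simp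
      have "c * fst y0 \<le> c * fst y" using lt c0 by (intro mult_left_mono) auto
      then have "snd (hh t y0) \<le> snd (hh t y)" using hh2[OF yP] hh2[OF y0(1)] by simp
      then have "pareto_le (hh t y0) (hh t y)" using lt by (simp add: pareto_le_def hh_def prod_eq_iff)
      moreover have "y0 \<in> Y" using y0(1) by (simp add: pareto_set_def)
      ultimately show False using yR by (auto simp: R_def)
    qed
    ultimately show ?thesis by blast
  qed
  have B: "R = pareto_set Y" if th: "t < k / (k + 1)"
  proof
    show "R \<subseteq> pareto_set Y" by (rule L3)
    have "t * (k + 1) < k" using th k0 by (simp add: field_simps)
    then have c0: "c < 0" by (simp add: c_def algebra_simps)
    show "pareto_set Y \<subseteq> R"
    proof
      fix y assume yP: "y \<in> pareto_set Y"
      show "y \<in> R"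
      proof (rule L5[OF yP])
        show "\<not> (\<exists>p\<in>pareto_set Y. pareto_le (hh t p) (hh t y))"
        proof
          assume "\<exists>p\<in>pareto_set Y. pareto_le (hh t p) (hh t y)"
          then obtain p where p: "p \<in> pareto_set Y" "pareto_le (hh t p) (hh t y)" by blast
          then have le: "fst p \<le> fst y" "snd (hh t p) \<le> snd (hh t y)"
            by (auto simp: pareto_le_def hh_def)
          have "p \<noteq> y" using p(2) by (auto simp: pareto_le_def)
          then have "fst p \<noteq> fst y" using same[OF p(1) yP] by blast
          with le have lt: "fst p < fst y" by simp
          have "c * fst y < c * fst p" using lt c0 by (simp add: mult_strict_left_mono_neg)
          with le(2) hh2[OF p(1)] hh2[OF yP] show False by simp
        qed
      qed
    qed
  qed
  show ?thesis using A B by blast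
qed

lemma img_eq:
  "F ` {C \<in> Cs. \<not> (\<exists>C'\<in>Cs. Q (F C') (F C))} = {y \<in> F ` Cs. \<not> (\<exists>z\<in>F ` Cs. Q z y)}"
  by auto

lemma tours_fin: "finite (tours n)"
proof -
  have "tours n \<subseteq> Pow ({0..<n} \<times> {0..<n})"
    by (auto simp: tours_def bij_betw_def)
  then show ?thesis by (rule finite_subset) simp
qed

lemma tours_ne: "tours n \<noteq> {}"
proof -
  have "bij_betw id {0..<n} {0..<n}" by simp
  then show ?thesis unfolding tours_def by blast
qed

theorem theorem2:
  fixes n :: nat and d1 d2 :: "nat \<Rightarrow> nat \<Rightarrow> real" and a k \<theta> :: real
  assumes "n \<ge> 2"
    and "\<forall>i j. i < n \<longrightarrow> j < n \<longrightarrow> i \<noteq> j \<longrightarrow> d1 i j > 0 \<and> d2 i j > 0"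
    and "a > 0" and "k > 0"
    and "0 < \<theta>" and "\<theta> < 1"
    and "pareto_set (Dvec d1 d2 ` tours n) =
           {(y1, y2). y2 = a - k * y1 \<and> y1 \<in> (\<lambda>C. fst (Dvec d1 d2 C)) ` tours n
                      \<and> y2 \<in> (\<lambda>C. snd (Dvec d1 d2 C)) ` tours n}"
  shows "(\<theta> \<ge> k / (k + 1) \<longrightarrow> (\<exists>y. reduced_pareto12 \<theta> (Dvec d1 d2) (tours n) = {y}))
       \<and> (\<theta> < k / (k + 1) \<longrightarrow>
            reduced_pareto12 \<theta> (Dvec d1 d2) (tours n) = pareto_set (Dvec d1 d2 ` tours n))"
proof -
  let ?F = "Dvec d1 d2"
  have red: "reduced_pareto12 \<theta> ?F (tours n)
      = {y \<in> ?F ` tours n. \<not> (\<exists>z\<in>?F ` tours n. pareto_le (hh \<theta> z) (hh \<theta> y))}"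
  proof -
    have "reduce12 \<theta> ?F = (\<lambda>C. hh \<theta> (?F C))" by (auto simp: reduce12_def hh_def)
    then have "reduced_pareto12 \<theta> ?F (tours n)
        = ?F ` {C \<in> tours n. \<not> (\<exists>C'\<in>tours n. (\<lambda>u v. pareto_le (hh \<theta> u) (hh \<theta> v)) (?F C') (?F C))}"
      by (simp add: reduced_pareto12_def pareto_opt_def)
    also have "\<dots> = {y \<in> ?F ` tours n. \<not> (\<exists>z\<in>?F ` tours n. pareto_le (hh \<theta> z) (hh \<theta> y))}"
      by (rule img_eq)
    finally show ?thesis .
  qed
  have line: "\<And>y. y \<in> pareto_set (?F ` tours n) \<Longrightarrow> snd y = a - k * fst y"
    using assms(7) by auto
  show ?thesis unfolding red
    using main[of "?F ` tours n", OF _ _ assms(5) assms(6) assms(4) line] tours_fin[of n] tours_ne[of n]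
    by blast
qed

end
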